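(* Let $k\ge3$. There is no family of bijections $\omega_n:\mathcal S_n\to\mathfrak S_{n+1}(1243,2143)$, $n\ge0$, such that for every $n$ and every $\pi\in\mathcal S_n$, $\tau_k(\pi)$ equals the number of subsequences of type $213\ldots k$ in $\omega_n(\pi)$.
   Context: $\mathcal S_n$ is the set of Schröder paths: lattice paths from $(0,0)$ to $(n,n)$ using east $(1,0)$, north $(0,1)$ and diagonal $(1,1)$ steps never going below $y=x$. For an east or diagonal step $s$ with left-most point $(a,c)$, $ht(s)=c-a$. For a Schröder path $\pi$, $\tau_k(\pi)=\binom{0}{k-1}+\sum_s\binom{ht(s)}{k-1}$, summed over east and diagonal steps (with $\binom{i}{j}=0$ if $j<0$ or $i<j$). $\mathfrak S_m(1243,2143)$ is the set of permutations of $\{1,\dots,m\}$ with no subsequence of the same relative order as $1243$ or $2143$; a subsequence has type $\sigma$ if it has the same relative order as $\sigma$; $213\ldots k=2,1,3,\dots,k$. *)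

theory Defs
  imports Main
begin

datatype step = East | North | Diag

definition xco :: "step list \<Rightarrow> nat" where
  "xco s = length (filter (\<lambda>t. t \<noteq> North) s)"
definition yco :: "step list \<Rightarrow> nat" where
  "yco s = length (filter (\<lambda>t. t \<noteq> East) s)"

definition schroder :: "nat \<Rightarrow> step list set" where
  "schroder n = {p. xco p = n \<and> yco p = n \<and>
      (\<forall>i\<le>length p. xco (take i p) \<le> yco (take i p))}"

text \<open>Height of the i-th step (meaningful for East/Diag steps): c - a where (a,c) is its left-most point.\<close>
definition ht :: "step list \<Rightarrow> nat \<Rightarrow> nat" where
  "ht p i = yco (take i p) - xco (take i p)"

definition tau :: "nat \<Rightarrow> step list \<Rightarrow> nat" where
  "tau k p = (0 choose (k - 1)) +
     (\<Sum>i\<in>{i. i < length p \<and> p ! i \<noteq> North}. ht p i choose (k - 1))"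

definition occ :: "nat list \<Rightarrow> nat list \<Rightarrow> nat" where
  "occ \<sigma> w = card {is. length is = length \<sigma> \<and> sorted_wrt (<) is \<and> (\<forall>j\<in>set is. j < length w) \<and>
      (\<forall>a<length \<sigma>. \<forall>b<length \<sigma>. (w ! (is ! a) < w ! (is ! b)) \<longleftrightarrow> (\<sigma> ! a < \<sigma> ! b))}"

definition perms :: "nat \<Rightarrow> nat list set" where
  "perms m = {w. distinct w \<and> set w = {1..m}}"

definition avoiders :: "nat list list \<Rightarrow> nat \<Rightarrow> nat list set" where
  "avoiders ps m = {w \<in> perms m. \<forall>\<sigma>\<in>set ps. occ \<sigma> w = 0}"

definition pat213 :: "nat \<Rightarrow> nat list" where
  "pat213 k = 2 # 1 # [3..<k+1]"

end

theory Submission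
  imports Defs
begin

lemma occ_le:
  fixes w :: "nat list"
  assumes len: "length w = k+1" and k: "k \<ge> 3"
  shows "occ (pat213 k) w \<le> k"
proof -
  define \<sigma> where "\<sigma> = pat213 k"
  have lens: "length \<sigma> = k" using k by (simp add: \<sigma>_def pat213_def)
  have s0: "\<sigma>!0 = 2" "\<sigma>!1 = 1" "\<sigma>!2 = 3" using k by (auto simp: \<sigma>_def pat213_def upt_conv_Cons simp del: upt_Suc)
  define S where "S = {xs. length xs = length \<sigma> \<and> sorted_wrt (<) xs \<and> (\<forall>j\<in>set xs. j < length w) \<and>
      (\<forall>a<length \<sigma>. \<forall>b<length \<sigma>. (w ! (xs ! a) < w ! (xs ! b)) \<longleftrightarrow> (\<sigma> ! a < \<sigma> ! b))}"
  have occ: "occ (pat213 k) w = card S" by (simp add: occ_def S_def \<sigma>_def)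
  define F where "F = {A. A \<subseteq> {0..k} \<and> card A = k}"
  have finF: "finite F" unfolding F_def
    by (rule finite_subset[of _ "Pow {0..k}"]) auto
  have cardF: "card F = k + 1"
    unfolding F_def using n_subsets[of "{0..k}" k] by simp
  have inj: "inj_on set S"
    by (rule inj_onI) (auto simp: S_def intro: strict_sorted_equal)
  have img: "set ` S \<subseteq> F"
  proof
    fix A assume "A \<in> set ` S"
    then obtain xs where "xs \<in> S" "A = set xs" by auto
    then show "A \<in> F" using len lens
      by (auto simp: S_def F_def strict_sorted_iff distinct_card)
  qed
  have notboth: "\<not> ([0..<k] \<in> S \<and> [1..<k+1] \<in> S)"
  proof
    assume h: "[0..<k] \<in> S \<and> [1..<k+1] \<in> S"
    have h1: "\<forall>a<length \<sigma>. \<forall>b<length \<sigma>. (w ! ([0..<k] ! a) < w ! ([0..<k] ! b)) \<longleftrightarrow> (\<sigma> ! a < \<sigma> ! b)"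
      using h unfolding S_def mem_Collect_eq by blast
    have h2: "\<forall>a<length \<sigma>. \<forall>b<length \<sigma>. (w ! ([1..<k+1] ! a) < w ! ([1..<k+1] ! b)) \<longleftrightarrow> (\<sigma> ! a < \<sigma> ! b)"
      using h unfolding S_def mem_Collect_eq by blast
    have b: "(w!1 < w!2) = (\<sigma>!1 < \<sigma>!2)" using h1[rule_format, of 1 2] k lens by (simp add: numeral_2_eq_2)
    have c: "(w!1 < w!2) = (\<sigma>!0 < \<sigma>!1)" using h2[rule_format, of 0 1] k lens by (simp add: numeral_2_eq_2 nth_upt del: upt_Suc)
    from b c s0 show False by simp
  qed
  obtain X where X: "X \<in> S \<or> True" "X = [0..<k] \<or> X = [1..<k+1]" "X \<notin> S"
    using notboth by blast
  have XF: "set X \<in> F" using X(2) by (auto simp: F_def simp del: upt_Suc)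
  have img2: "set ` S \<subseteq> F - {set X}"
  proof
    fix A assume "A \<in> set ` S"
    then obtain xs where i: "xs \<in> S" "A = set xs" by auto
    have "A \<noteq> set X"
    proof
      assume "A = set X"
      moreover have "sorted_wrt (<) X" using X(2) by (auto simp del: upt_Suc)
      moreover have "sorted_wrt (<) xs" using i by (simp add: S_def)
      ultimately have "X = xs" using i by (metis strict_sorted_equal)
      then show False using i X by simp
    qed
    then show "A \<in> F - {set X}" using img i by auto
  qed
  have "card S = card (set ` S)" using inj by (simp add: card_image)
  also have "\<dots> \<le> card (F - {set X})" using img2 finF by (intro card_mono) auto
  also have "\<dots> = k" using XF cardF finF by simp
  finally show ?thesis using occ by simp
qed


lemma path_x: "xco (take i (replicate k North @ replicate k East)) = min (i - k) k"
  by (cases "i \<le> k") (auto simp: xco_def take_append)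

lemma path_y: "yco (take i (replicate k North @ replicate k East)) = min i k"
  by (cases "i \<le> k") (auto simp: yco_def take_append)

lemma path_in: "replicate k North @ replicate k East \<in> schroder k"
  unfolding schroder_def mem_Collect_eq
proof (intro conjI allI impI)
  let ?p = "replicate k North @ replicate k East"
  have e: "take (2*k) ?p = ?p" by simp
  show "xco ?p = k" using path_x[of "2*k" k] by (simp only: e)
  show "yco ?p = k" using path_y[of "2*k" k] by (simp only: e)
  fix i show "xco (take i ?p) \<le> yco (take i ?p)"
    by (simp only: path_x path_y)
qed

lemma path_tau:
  assumes k: "k \<ge> 3"
  shows "tau k (replicate k North @ replicate k East) \<ge> k + 1"
proof -
  define p where "p = replicate k North @ replicate k East"
  define I where "I = {i. i < length p \<and> p ! i \<noteq> North}"
  have len: "length p = 2*k" by (simp add: p_def)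
  have pk: "p ! k = East" "p ! (k+1) = East" using k by (auto simp: p_def nth_append)
  have sub: "{k, k+1} \<subseteq> I" using k len pk by (auto simp: I_def)
  have fin: "finite I" by (simp add: I_def)
  have htk: "ht p k = k" "ht p (k+1) = k - 1"
    using path_x[of k k] path_y[of k k] path_x[of "k+1" k] path_y[of "k+1" k] by (auto simp: ht_def p_def)
  have ck: "k choose (k - 1) = k" using binomial_symmetric[of "k-1" k] k by simp
  have "k + 1 = (\<Sum>i\<in>{k,k+1}. ht p i choose (k - 1))"
    using htk k ck by simp
  also have "\<dots> \<le> (\<Sum>i\<in>I. ht p i choose (k - 1))"
    by (rule sum_mono2[OF fin sub]) auto
  also have "\<dots> \<le> tau k p" by (simp add: tau_def I_def)
  finally show ?thesis by (simp add: p_def)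
qed

theorem mainTheorem18:
  fixes k :: nat
  assumes "k \<ge> 3"
  shows "\<not> (\<exists>\<omega> :: nat \<Rightarrow> step list \<Rightarrow> nat list.
            \<forall>n. bij_betw (\<omega> n) (schroder n) (avoiders [[1,2,4,3],[2,1,4,3]] (n+1)) \<and>
                (\<forall>\<pi>\<in>schroder n. tau k \<pi> = occ (pat213 k) (\<omega> n \<pi>)))"
proof
  assume "\<exists>\<omega> :: nat \<Rightarrow> step list \<Rightarrow> nat list.
            \<forall>n. bij_betw (\<omega> n) (schroder n) (avoiders [[1,2,4,3],[2,1,4,3]] (n+1)) \<and>
                (\<forall>\<pi>\<in>schroder n. tau k \<pi> = occ (pat213 k) (\<omega> n \<pi>))"
  then obtain \<omega> :: "nat \<Rightarrow> step list \<Rightarrow> nat list" where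
    h: "bij_betw (\<omega> k) (schroder k) (avoiders [[1,2,4,3],[2,1,4,3]] (k+1))"
       "\<forall>\<pi>\<in>schroder k. tau k \<pi> = occ (pat213 k) (\<omega> k \<pi>)" by blast
  define p where "p = replicate k North @ replicate k East"
  have pin: "p \<in> schroder k" using path_in by (simp add: p_def)
  have "\<omega> k p \<in> avoiders [[1,2,4,3],[2,1,4,3]] (k+1)"
    using h(1) pin by (auto simp: bij_betw_def)
  then have "distinct (\<omega> k p)" "set (\<omega> k p) = {1..k+1}"
    by (auto simp: avoiders_def perms_def)
  then have "length (\<omega> k p) = k + 1"
    by (metis card_atLeastAtMost diff_Suc_1 distinct_card add.commute plus_1_eq_Suc)
  then have "occ (pat213 k) (\<omega> k p) \<le> k" using occ_le assms by blast
  moreover have "tau k p \<ge> k + 1" using path_tau assms by (simp add: p_def)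
  ultimately show False using h(2) pin by fastforce
qed

end
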